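(* Let $n\ge1$, $a,b\ge0$ with $a+b\le n$, and let $B$ be a complex bilinear form on $\mathbb{C}^n$. Let $M^{quad}\subset\mathbb{C}^n\times\mathbb{R}$ be given by $$s=\sum_{j=1}^a|z_j|^2-\sum_{j=a+1}^{a+b}|z_j|^2+B(z,z)+\overline{B(z,z)}=Q(z,\bar z).$$ Then $M^{quad}$ has an isolated CR singularity (at the origin) if and only if the real quadratic form $Q$ is nondegenerate. In particular, the set of $B$ for which $M^{quad}$ has an isolated CR singularity is an open dense set; it is the complement of a proper real-algebraic subvariety of the set of all symmetric complex $n\times n$ matrices representing $B(z,z)$. Moreover, if $M\subset\mathbb{C}^n\times\mathbb{R}$ is a submanifold given by $s=Q(z,\bar z)+E(z,\bar z)$ with $E$ smooth, real-valued and $O(3)$ (so that $M^{quad}$ is its quadric model), and $Q$ is nondegenerate, then $M$ also has an isolated CR singularity at the origin.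
   Context: Coordinates $(z,s)\in\mathbb{C}^n\times\mathbb{R}$. For a real hypersurface $M$, a point $p\in M$ is a CR singularity if $\dim_{\mathbb{C}}\big((\mathbb{C}\otimes T_pM)\cap\operatorname{span}\{\partial/\partial\bar z_1,\dots,\partial/\partial\bar z_n\}\big)=n$ (equivalently, the $z$-plane $\mathbb{C}^n\times\{s\}$ is tangent to $M$ at $p$); otherwise (dimension $n-1$) $p$ is a CR point. $Q$ is nondegenerate if it is represented by a nonsingular real symmetric $2n\times 2n$ matrix. *)

theory Defs
  imports "HOL-Analysis.Analysis"
begin

text \<open>Coordinates (z,s) in C^n x R; C^n is modelled as complex ^ 'n for a finite
index type 'n, with a fixed enumeration sigma : 'n -> {0..<n} used to speak of
"the first a coordinates" etc.\<close>

definition cbilinear :: "(complex^'n \<Rightarrow> complex^'n \<Rightarrow> complex) \<Rightarrow> bool" where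
  "cbilinear B \<longleftrightarrow>
     (\<forall>x y w. B (x + y) w = B x w + B y w) \<and>
     (\<forall>x y w. B w (x + y) = B w x + B w y) \<and>
     (\<forall>c x w. B (c *s x) w = c * B x w) \<and>
     (\<forall>c x w. B w (c *s x) = c * B w x)"

definition bilin_of_matrix :: "complex^'n^'n \<Rightarrow> complex^'n \<Rightarrow> complex^'n \<Rightarrow> complex" where
  "bilin_of_matrix A z w = (\<Sum>i\<in>UNIV. \<Sum>j\<in>UNIV. A$i$j * z$i * w$j)"

definition quadQ :: "('n \<Rightarrow> nat) \<Rightarrow> nat \<Rightarrow> nat \<Rightarrow> (complex^'n \<Rightarrow> complex^'n \<Rightarrow> complex)
                      \<Rightarrow> complex^'n \<Rightarrow> real" where
  "quadQ \<sigma> a b B z =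
     (\<Sum>j\<in>{j. \<sigma> j < a}. (cmod (z$j))^2)
     - (\<Sum>j\<in>{j. a \<le> \<sigma> j \<and> \<sigma> j < a + b}. (cmod (z$j))^2)
     + Re (B z z + cnj (B z z))"

definition realify :: "complex^'n \<Rightarrow> real^('n + 'n)" where
  "realify z = (\<chi> k. case k of Inl j \<Rightarrow> Re (z$j) | Inr j \<Rightarrow> Im (z$j))"

definition nondegenerate_form :: "(complex^'n \<Rightarrow> real) \<Rightarrow> bool" where
  "nondegenerate_form Q \<longleftrightarrow>
     (\<exists>S :: real^('n + 'n)^('n + 'n).
        transpose S = S \<and> (\<forall>z. Q z = realify z \<bullet> (S *v realify z)) \<and> det S \<noteq> 0)"

text \<open>Hypersurface M = {(z, F z) | z in U} in C^n x R (graph of F over open U).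
Its real tangent space at (z, F z) is the graph of the differential of F.\<close>
definition graph_tangent_space :: "(complex^'n \<Rightarrow> real) \<Rightarrow> complex^'n \<Rightarrow> ((complex^'n) \<times> real) set" where
  "graph_tangent_space F z = range (\<lambda>v. (v, frechet_derivative F (at z) v))"

text \<open>CR singularity at (z, F z): the z-plane C^n x {s} is tangent to M there.\<close>
definition CR_singular_graph :: "(complex^'n \<Rightarrow> real) \<Rightarrow> complex^'n \<Rightarrow> bool" where
  "CR_singular_graph F z \<longleftrightarrow> (\<forall>v. (v, 0) \<in> graph_tangent_space F z)"

definition isolated_CR_singularity_at_origin ::
    "(complex^'n) set \<Rightarrow> (complex^'n \<Rightarrow> real) \<Rightarrow> bool" where
  "isolated_CR_singularity_at_origin U F \<longleftrightarrow>
     0 \<in> U \<and> CR_singular_graph F 0 \<and>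
     (\<exists>V. open V \<and> (0, F 0) \<in> V \<and>
        (\<forall>z\<in>U. (z, F z) \<in> V \<and> z \<noteq> 0 \<longrightarrow> \<not> CR_singular_graph F z))"

fun iter_deriv :: "'a::real_normed_vector list \<Rightarrow> ('a \<Rightarrow> real) \<Rightarrow> 'a \<Rightarrow> real" where
  "iter_deriv [] f = f"
| "iter_deriv (v # vs) f = (\<lambda>x. frechet_derivative (iter_deriv vs f) (at x) v)"

definition smooth_on :: "'a::real_normed_vector set \<Rightarrow> ('a \<Rightarrow> real) \<Rightarrow> bool" where
  "smooth_on U f \<longleftrightarrow>
     (\<forall>vs. iter_deriv vs f differentiable_on U \<and> continuous_on U (iter_deriv vs f))"

inductive_set real_poly_fun :: "((complex^'n^'n) \<Rightarrow> real) set" where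
  const: "(\<lambda>A. c) \<in> real_poly_fun"
| re: "(\<lambda>A. Re (A$i$j)) \<in> real_poly_fun"
| im: "(\<lambda>A. Im (A$i$j)) \<in> real_poly_fun"
| add: "p \<in> real_poly_fun \<Longrightarrow> q \<in> real_poly_fun \<Longrightarrow> (\<lambda>A. p A + q A) \<in> real_poly_fun"
| mult: "p \<in> real_poly_fun \<Longrightarrow> q \<in> real_poly_fun \<Longrightarrow> (\<lambda>A. p A * q A) \<in> real_poly_fun"

definition proper_real_algebraic_subvariety ::
    "(complex^'n^'n) set \<Rightarrow> (complex^'n^'n) set \<Rightarrow> bool" where
  "proper_real_algebraic_subvariety S Z \<longleftrightarrow>
     (\<exists>P. finite P \<and> P \<subseteq> real_poly_fun \<and> Z = {A\<in>S. \<forall>p\<in>P. p A = 0}) \<and> Z \<noteq> S"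

end

theory Submission
  imports Defs
begin


definition unrealify :: "real^('n + 'n) \<Rightarrow> complex^'n" where
  "unrealify x = (\<chi> j. Complex (x $ Inl j) (x $ Inr j))"

lemma realify_unrealify[simp]: "realify (unrealify x) = x"
  by (auto simp: realify_def unrealify_def vec_eq_iff split: sum.splits)

lemma unrealify_realify[simp]: "unrealify (realify z) = z"
  by (auto simp: realify_def unrealify_def vec_eq_iff complex_eq_iff)

lemma realify_add: "realify (x + y) = realify x + realify y"
  by (auto simp: realify_def vec_eq_iff split: sum.splits)

lemma realify_scaleR: "realify (c *\<^sub>R x) = c *\<^sub>R realify x"
  by (auto simp: realify_def vec_eq_iff split: sum.splits)

lemma realify_0[simp]: "realify 0 = 0"
  by (auto simp: realify_def vec_eq_iff split: sum.splits)

lemma realify_eq_0[simp]: "realify z = 0 \<longleftrightarrow> z = 0"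
  by (metis realify_0 unrealify_realify)

lemma linear_realify: "linear realify"
  by (rule linearI) (auto simp: realify_add realify_scaleR)

lemma bounded_linear_realify: "bounded_linear realify"
  using linear_realify linear_conv_bounded_linear by blast

lemma inner_realify: "realify z \<bullet> realify z = z \<bullet> z"
proof -
  have "realify z \<bullet> realify z = (\<Sum>k\<in>UNIV <+> UNIV. realify z $ k * realify z $ k)"
    by (simp add: inner_vec_def)
  also have "\<dots> = (\<Sum>j\<in>UNIV. Re (z$j) * Re (z$j)) + (\<Sum>j\<in>UNIV. Im (z$j) * Im (z$j))"
    by (subst sum.Plus) (auto simp: realify_def)
  also have "\<dots> = z \<bullet> z"
    by (simp add: inner_vec_def inner_complex_def sum.distrib)
  finally show ?thesis .
qed

lemma norm_realify[simp]: "norm (realify z) = norm z"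
  by (simp add: norm_eq_sqrt_inner inner_realify)

lemma norm_unrealify[simp]: "norm (unrealify x) = norm x"
  by (metis norm_realify realify_unrealify)


definition qf :: "real^('n+'n)^('n+'n) \<Rightarrow> complex^'n \<Rightarrow> real" where
  "qf S z = realify z \<bullet> (S *v realify z)"

lemma sym_inner: 
  fixes S :: "real^'m^'m"
  assumes "transpose S = S" shows "x \<bullet> (S *v h) = h \<bullet> (S *v x)"
proof -
  have "x \<bullet> (S *v h) = (x v* S) \<bullet> h" by (simp add: dot_lmul_matrix)
  also have "x v* S = S *v x" by (metis assms transpose_matrix_vector)
  finally show ?thesis by (simp add: inner_commute)
qed

lemma qf_deriv:
  assumes "transpose S = S"
  shows "(qf S has_derivative (\<lambda>w. 2 * (realify w \<bullet> (S *v realify z)))) (at z)"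
proof -
  have bl: "bounded_linear ((*v) S)"
    by simp
  have d: "((\<lambda>x. x \<bullet> (S *v x)) has_derivative (\<lambda>h. 2 * (h \<bullet> (S *v x)))) (at x)" for x
  proof -
    have "((\<lambda>x. x \<bullet> (S *v x)) has_derivative (\<lambda>h. x \<bullet> (S *v h) + h \<bullet> (S *v x))) (at x)"
      by (rule has_derivative_inner[OF has_derivative_ident bounded_linear_imp_has_derivative[OF bl]])
    moreover have "(\<lambda>h. x \<bullet> (S *v h) + h \<bullet> (S *v x)) = (\<lambda>h. 2 * (h \<bullet> (S *v x)))"
      by (rule ext) (simp only: sym_inner[OF assms, of x] mult_2)
    ultimately show ?thesis by simp
  qed
  from has_derivative_compose[OF bounded_linear_imp_has_derivative[OF bounded_linear_realify] d]
  show ?thesis by (simp add: qf_def[abs_def] o_def)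
qed


lemma det_nz_ker:
  fixes S :: "real^'m^'m"
  shows "det S \<noteq> 0 \<longleftrightarrow> (\<forall>x. S *v x = 0 \<longrightarrow> x = 0)"
  by (simp add: invertible_det_nz[symmetric] invertible_left_inverse matrix_left_invertible_ker)

lemma CR_sing_iff: "CR_singular_graph F z \<longleftrightarrow> (\<forall>v. frechet_derivative F (at z) v = 0)"
  by (auto simp: CR_singular_graph_def graph_tangent_space_def image_iff)

lemma CR_sing_qf:
  assumes "transpose S = S"
  shows "CR_singular_graph (qf S) z \<longleftrightarrow> S *v realify z = 0"
proof -
  have fd: "frechet_derivative (qf S) (at z) = (\<lambda>w. 2 * (realify w \<bullet> (S *v realify z)))"
    using frechet_derivative_at[OF qf_deriv[OF assms]] by simp
  show ?thesis
    unfolding CR_sing_iff fd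
  proof
    assume "\<forall>v. 2 * (realify v \<bullet> (S *v realify z)) = 0"
    then have "2 * (realify (unrealify (S *v realify z)) \<bullet> (S *v realify z)) = 0" by blast
    then show "S *v realify z = 0" by simp
  qed simp
qed

lemma qf_0[simp]: "qf S 0 = 0"
  by (simp add: qf_def)

lemma iso_qf:
  assumes sym: "transpose S = S"
  shows "isolated_CR_singularity_at_origin UNIV (qf S) \<longleftrightarrow> det S \<noteq> 0"
proof
  assume "det S \<noteq> 0"
  then have ker: "\<And>x. S *v x = 0 \<Longrightarrow> x = 0" using det_nz_ker by blast
  show "isolated_CR_singularity_at_origin UNIV (qf S)"
    unfolding isolated_CR_singularity_at_origin_def
    by (intro conjI exI[of _ UNIV]) (auto simp: CR_sing_qf[OF sym] dest!: ker)
next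
  assume iso: "isolated_CR_singularity_at_origin UNIV (qf S)"
  show "det S \<noteq> 0"
  proof
    assume "det S = 0"
    then obtain x where x: "S *v x = 0" "x \<noteq> 0" using det_nz_ker by blast
    from iso obtain V where V: "open V" "(0, 0) \<in> V"
      and nv: "\<And>z. (z, qf S z) \<in> V \<Longrightarrow> z \<noteq> 0 \<Longrightarrow> \<not> CR_singular_graph (qf S) z"
      unfolding isolated_CR_singularity_at_origin_def by auto
    obtain e where e: "e > 0" "ball (0, 0) e \<subseteq> V"
      using V open_contains_ball by blast
    define t where "t = e / (2 * norm x)"
    have t: "t > 0" using e x by (simp add: t_def)
    define z where "z = unrealify (t *\<^sub>R x)"
    have rz: "realify z = t *\<^sub>R x" by (simp add: z_def)
    have Sz: "S *v realify z = 0"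
      by (simp add: rz matrix_vector_mult_scaleR x)
    have qz: "qf S z = 0" by (simp add: qf_def Sz)
    have nz: "norm z = e / 2" using x e by (simp add: z_def t_def)
    have "(z, qf S z) \<in> V"
      using e nz by (intro subsetD[OF e(2)]) (simp add: qz dist_norm norm_Pair)
    moreover have "z \<noteq> 0" using nz e by auto
    ultimately show False using nv CR_sing_qf[OF sym] Sz by blast
  qed
qed


definition hcoef :: "('n \<Rightarrow> nat) \<Rightarrow> nat \<Rightarrow> nat \<Rightarrow> 'n \<Rightarrow> real" where
  "hcoef \<sigma> a b j = (if \<sigma> j < a then 1 else if \<sigma> j < a + b then -1 else 0)"

definition Smat :: "('n::finite \<Rightarrow> nat) \<Rightarrow> nat \<Rightarrow> nat \<Rightarrow> ('n \<Rightarrow> 'n \<Rightarrow> complex) \<Rightarrow> real^('n+'n)^('n+'n)" where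
  "Smat \<sigma> a b \<beta> = (\<chi> k l. case k of
      Inl i \<Rightarrow> (case l of Inl j \<Rightarrow> (if i = j then hcoef \<sigma> a b i else 0) + Re (\<beta> i j + \<beta> j i)
                        | Inr j \<Rightarrow> - Im (\<beta> i j + \<beta> j i))
    | Inr i \<Rightarrow> (case l of Inl j \<Rightarrow> - Im (\<beta> i j + \<beta> j i)
                        | Inr j \<Rightarrow> (if i = j then hcoef \<sigma> a b i else 0) - Re (\<beta> i j + \<beta> j i)))"

lemma Smat_sym: "transpose (Smat \<sigma> a b \<beta>) = Smat \<sigma> a b \<beta>"
  by (auto simp: transpose_def Smat_def vec_eq_iff split: sum.splits)

lemma qf_expand:
  fixes M :: "real^('n::finite+'n)^('n+'n)"
  shows "qf M z = (\<Sum>i\<in>UNIV. \<Sum>j\<in>UNIV.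
     Re (z$i) * M$Inl i$Inl j * Re (z$j) + Re (z$i) * M$Inl i$Inr j * Im (z$j)
   + Im (z$i) * M$Inr i$Inl j * Re (z$j) + Im (z$i) * M$Inr i$Inr j * Im (z$j))" (is "_ = ?R")
proof -
  have "qf M z = (\<Sum>k\<in>UNIV <+> UNIV. realify z $ k * (\<Sum>l\<in>UNIV <+> UNIV. M $ k $ l * realify z $ l))"
    by (simp add: qf_def inner_vec_def matrix_vector_mult_def)
  also have "\<dots> = ?R"
    by (simp add: sum.Plus realify_def sum_distrib_left sum.distrib algebra_simps del: UNIV_Plus_UNIV)
  finally show ?thesis .
qed


lemma qf_Smat:
  "qf (Smat \<sigma> a b \<beta>) z = (\<Sum>j\<in>{j. \<sigma> j < a}. (cmod (z$j))^2)
     - (\<Sum>j\<in>{j. a \<le> \<sigma> j \<and> \<sigma> j < a + b}. (cmod (z$j))^2)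
     + 2 * Re (\<Sum>i\<in>UNIV. \<Sum>j\<in>UNIV. \<beta> i j * z$i * z$j)"
proof -
  have pt: "Re (z$i) * Smat \<sigma> a b \<beta>$Inl i$Inl j * Re (z$j) + Re (z$i) * Smat \<sigma> a b \<beta>$Inl i$Inr j * Im (z$j)
   + Im (z$i) * Smat \<sigma> a b \<beta>$Inr i$Inl j * Re (z$j) + Im (z$i) * Smat \<sigma> a b \<beta>$Inr i$Inr j * Im (z$j)
    = (if i = j then hcoef \<sigma> a b i * (cmod (z$i))^2 else 0) + Re ((\<beta> i j + \<beta> j i) * z$i * z$j)" for i j
    using cmod_power2[of "z$i"] by (auto simp: Smat_def algebra_simps power2_eq_square) (simp add: mult.assoc[symmetric] distrib_right[symmetric])
  have "qf (Smat \<sigma> a b \<beta>) z = (\<Sum>i\<in>UNIV. \<Sum>j\<in>UNIV. (if i = j then hcoef \<sigma> a b i * (cmod (z$i))^2 else 0) + Re ((\<beta> i j + \<beta> j i) * z$i * z$j))"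
    unfolding qf_expand pt ..
  also have "\<dots> = (\<Sum>i\<in>UNIV. hcoef \<sigma> a b i * (cmod (z$i))^2) + Re (\<Sum>i\<in>UNIV. \<Sum>j\<in>UNIV. (\<beta> i j + \<beta> j i) * z$i * z$j)"
    by (simp add: sum.distrib Re_sum)
  also have "(\<Sum>i\<in>UNIV. \<Sum>j\<in>UNIV. (\<beta> i j + \<beta> j i) * z$i * z$j) = 2 * (\<Sum>i\<in>UNIV. \<Sum>j\<in>UNIV. \<beta> i j * z$i * z$j)"
  proof -
    have "(\<Sum>i\<in>UNIV. \<Sum>j\<in>UNIV. \<beta> j i * z$i * z$j) = (\<Sum>i\<in>UNIV. \<Sum>j\<in>UNIV. \<beta> i j * z$i * z$j)"
      by (subst sum.swap) (simp add: algebra_simps)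
    then show ?thesis by (simp add: algebra_simps sum.distrib)
  qed
  also have "(\<Sum>i\<in>UNIV. hcoef \<sigma> a b i * (cmod (z$i))^2) = (\<Sum>j\<in>{j. \<sigma> j < a}. (cmod (z$j))^2)
     - (\<Sum>j\<in>{j. a \<le> \<sigma> j \<and> \<sigma> j < a + b}. (cmod (z$j))^2)"
  proof -
    let ?f = "\<lambda>j. (cmod (z$j))^2"
    have e1: "(\<Sum>j\<in>{j. \<sigma> j < a}. ?f j) = (\<Sum>j\<in>UNIV. if \<sigma> j < a then ?f j else 0)"
      using sum.inter_filter[of UNIV ?f "\<lambda>j. \<sigma> j < a"] by simp
    have e2: "(\<Sum>j\<in>{j. a \<le> \<sigma> j \<and> \<sigma> j < a + b}. ?f j) = (\<Sum>j\<in>UNIV. if a \<le> \<sigma> j \<and> \<sigma> j < a + b then ?f j else 0)"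
      using sum.inter_filter[of UNIV ?f "\<lambda>j. a \<le> \<sigma> j \<and> \<sigma> j < a + b"] by simp
    show ?thesis unfolding e1 e2 sum_subtractf[symmetric]
      by (rule sum.cong) (auto simp: hcoef_def)
  qed
  finally show ?thesis by simp
qed


lemma quadQ_Smat_gen:
  assumes "\<And>z. B z z = (\<Sum>i\<in>UNIV. \<Sum>j\<in>UNIV. \<beta> i j * z$i * z$j)"
  shows "quadQ \<sigma> a b B = qf (Smat \<sigma> a b \<beta>)"
proof (rule ext)
  fix z
  have "Re (B z z + cnj (B z z)) = 2 * Re (B z z)" by simp
  then show "quadQ \<sigma> a b B z = qf (Smat \<sigma> a b \<beta>) z"
    by (simp only: quadQ_def qf_Smat assms)
qed

lemma quadQ_matrix: "quadQ \<sigma> a b (bilin_of_matrix A) = qf (Smat \<sigma> a b (\<lambda>i j. A$i$j))"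
  by (rule quadQ_Smat_gen) (simp add: bilin_of_matrix_def)

lemma cbil_zero_left: "cbilinear B \<Longrightarrow> B 0 w = 0"
  unfolding cbilinear_def by (metis add.right_neutral add_cancel_right_right)

lemma cbil_zero_right: "cbilinear B \<Longrightarrow> B w 0 = 0"
  unfolding cbilinear_def by (metis add.right_neutral add_cancel_right_right)

lemma cbil_sum_left: assumes "cbilinear B" "finite I" shows "B (\<Sum>i\<in>I. f i) w = (\<Sum>i\<in>I. B (f i) w)"
  using assms(2) by (induction I rule: finite_induct) (use assms in \<open>auto simp: cbil_zero_left cbilinear_def\<close>)

lemma cbil_sum_right: assumes "cbilinear B" "finite I" shows "B w (\<Sum>i\<in>I. f i) = (\<Sum>i\<in>I. B w (f i))"
  using assms(2) by (induction I rule: finite_induct) (use assms in \<open>auto simp: cbil_zero_right cbilinear_def\<close>)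

lemma cbil_expand:
  assumes "cbilinear B"
  shows "B z w = (\<Sum>i\<in>UNIV. \<Sum>j\<in>UNIV. B (axis i 1) (axis j 1) * z$i * w$j)"
proof -
  have "B z w = B (\<Sum>i\<in>UNIV. z$i *s axis i 1) (\<Sum>j\<in>UNIV. w$j *s axis j 1)"
    by (simp add: basis_expansion)
  also have "\<dots> = (\<Sum>i\<in>UNIV. \<Sum>j\<in>UNIV. B (z$i *s axis i 1) (w$j *s axis j 1))"
    by (simp add: cbil_sum_left[OF assms] cbil_sum_right[OF assms]) (rule sum.swap)
  also have "\<dots> = (\<Sum>i\<in>UNIV. \<Sum>j\<in>UNIV. B (axis i 1) (axis j 1) * z$i * w$j)"
    using assms by (simp add: cbilinear_def algebra_simps)
  finally show ?thesis .
qed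

lemma quadQ_cbil:
  assumes "cbilinear B"
  shows "quadQ \<sigma> a b B = qf (Smat \<sigma> a b (\<lambda>i j. B (axis i 1) (axis j 1)))"
  by (rule quadQ_Smat_gen) (rule cbil_expand[OF assms])



lemma real_quad_zero:
  fixes \<alpha> \<gamma> :: real
  assumes H: "\<forall>\<epsilon>>0. \<exists>\<tau>>0. \<forall>t. 0 < t \<and> t < \<tau> \<longrightarrow> \<bar>t * \<alpha> + t^2 * \<gamma>\<bar> \<le> \<epsilon> * t^2"
  shows "\<alpha> = 0 \<and> \<gamma> = 0"
proof -
  have div: "\<bar>\<alpha> + t * \<gamma>\<bar> \<le> \<epsilon> * t" if "\<bar>t * \<alpha> + t^2 * \<gamma>\<bar> \<le> \<epsilon> * t^2" "t > 0" for t \<epsilon>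
  proof -
    have "\<bar>t * \<alpha> + t^2 * \<gamma>\<bar> = t * \<bar>\<alpha> + t * \<gamma>\<bar>"
    proof -
      have "t * \<alpha> + t^2 * \<gamma> = t * (\<alpha> + t * \<gamma>)" by (simp add: power2_eq_square algebra_simps)
      then show ?thesis using \<open>t > 0\<close> by (simp add: abs_mult)
    qed
    with that have "t * \<bar>\<alpha> + t * \<gamma>\<bar> \<le> t * (\<epsilon> * t)" by (simp add: power2_eq_square algebra_simps)
    with \<open>t > 0\<close> show ?thesis by simp
  qed
  have a: "\<alpha> = 0"
  proof (rule ccontr)
    assume "\<alpha> \<noteq> 0"
    obtain \<tau> where \<tau>: "\<tau> > 0" "\<forall>t. 0 < t \<and> t < \<tau> \<longrightarrow> \<bar>t * \<alpha> + t^2 * \<gamma>\<bar> \<le> 1 * t^2"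
      using H by (meson zero_less_one)
    define t where "t = min (\<tau>/2) (\<bar>\<alpha>\<bar> / (2 * (\<bar>\<gamma>\<bar> + 1)))"
    have t: "t > 0" "t < \<tau>" using \<tau> \<open>\<alpha> \<noteq> 0\<close> by (auto simp: t_def)
    have "\<bar>\<alpha> + t * \<gamma>\<bar> \<le> 1 * t" using div \<tau> t by blast
    moreover have "\<bar>\<alpha>\<bar> \<le> \<bar>\<alpha> + t * \<gamma>\<bar> + \<bar>t * \<gamma>\<bar>" by linarith
    moreover have "\<bar>t * \<gamma>\<bar> = t * \<bar>\<gamma>\<bar>" using t by (simp add: abs_mult)
    ultimately have "\<bar>\<alpha>\<bar> \<le> t * (\<bar>\<gamma>\<bar> + 1)" by (simp add: algebra_simps)
    also have "\<dots> \<le> \<bar>\<alpha>\<bar> / 2"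
    proof -
      have "t \<le> \<bar>\<alpha>\<bar> / (2 * (\<bar>\<gamma>\<bar> + 1))" by (simp add: t_def)
      then have "t * (\<bar>\<gamma>\<bar> + 1) \<le> \<bar>\<alpha>\<bar> / (2 * (\<bar>\<gamma>\<bar> + 1)) * (\<bar>\<gamma>\<bar> + 1)"
        by (intro mult_right_mono) auto
      moreover have "\<bar>\<alpha>\<bar> / (2 * (\<bar>\<gamma>\<bar> + 1)) * (\<bar>\<gamma>\<bar> + 1) = \<bar>\<alpha>\<bar> / 2"
      proof -
        have "\<bar>\<gamma>\<bar> + 1 \<noteq> 0" by linarith
        then show ?thesis by (simp add: field_simps)
      qed
      ultimately show ?thesis by linarith
    qed
    finally show False using \<open>\<alpha> \<noteq> 0\<close> by simp
  qed
  have g: "\<gamma> = 0"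
  proof (rule ccontr)
    assume "\<gamma> \<noteq> 0"
    obtain \<tau> where \<tau>: "\<tau> > 0" "\<forall>t. 0 < t \<and> t < \<tau> \<longrightarrow> \<bar>t * \<alpha> + t^2 * \<gamma>\<bar> \<le> (\<bar>\<gamma>\<bar>/2) * t^2"
      using H \<open>\<gamma> \<noteq> 0\<close> by (meson half_gt_zero zero_less_abs_iff)
    define t where "t = \<tau>/2"
    have t: "t > 0" "t < \<tau>" using \<tau> by (auto simp: t_def)
    have "\<bar>t * \<alpha> + t^2 * \<gamma>\<bar> \<le> (\<bar>\<gamma>\<bar>/2) * t^2" using \<tau> t by blast
    from div[OF this t(1)] have "\<bar>t * \<gamma>\<bar> \<le> (\<bar>\<gamma>\<bar>/2) * t" using a by simp
    then show False using t \<open>\<gamma> \<noteq> 0\<close> by (simp add: abs_mult)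
  qed
  show ?thesis using a g by simp
qed


lemma key_est:
  fixes E :: "'a::euclidean_space \<Rightarrow> real" and E' :: "'a \<Rightarrow> 'a \<Rightarrow> real"
  assumes U: "open U" "0 \<in> U"
    and dE: "\<And>x. x \<in> U \<Longrightarrow> (E has_derivative E' x) (at x)"
    and dg: "((\<lambda>x. E' x v) has_derivative D) (at 0)"
    and dpos: "\<delta> > 0" and bd: "\<And>z. norm z < \<delta> \<Longrightarrow> \<bar>E z\<bar> \<le> C * norm z ^ 3"
  shows "\<forall>\<epsilon>>0. \<exists>\<tau>>0. \<forall>t. 0 < t \<and> t < \<tau> \<longrightarrow> \<bar>t * E' 0 v + t^2 * (D u + D v / 2)\<bar> \<le> \<epsilon> * t^2"
proof (intro allI impI)
  fix \<epsilon> :: real assume \<epsilon>: "\<epsilon> > 0"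
  define C0 where "C0 = max C 0"
  have C00: "C0 \<ge> 0" by (simp add: C0_def)
  have C0: "\<bar>E z\<bar> \<le> C0 * norm z ^ 3" if "norm z < \<delta>" for z
  proof -
    have "C * norm z ^ 3 \<le> C0 * norm z ^ 3" by (intro mult_right_mono) (auto simp: C0_def)
    then show ?thesis using bd[OF that] by linarith
  qed
  define N where "N = norm u + norm v + 1"
  have N: "N > 0" "norm u + norm v \<le> N"
    by (auto simp: N_def add_nonneg_pos)
  have blD: "bounded_linear D" using dg has_derivative_bounded_linear by blast
  have "\<epsilon>/2/N > 0" using \<epsilon> N by simp
  then obtain d where d: "d > 0" and dd: "\<And>y. norm y < d \<Longrightarrow> \<bar>E' y v - E' 0 v - D y\<bar> \<le> (\<epsilon>/2/N) * norm y"
    using dg[unfolded has_derivative_at_alt] by (metis diff_zero real_norm_def)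
  obtain r where r: "r > 0" "ball 0 r \<subseteq> U" using U open_contains_ball by blast
  define \<tau> where "\<tau> = min (min (min d r) \<delta> / N) (\<epsilon> / (4*C0*N^3 + 1))"
  have den: "4*C0*N^3 + 1 > 0" using C00 N by (simp add: add_nonneg_pos)
  have \<tau>pos: "\<tau> > 0" using d r dpos N \<epsilon> den by (simp add: \<tau>_def)
  show "\<exists>\<tau>>0. \<forall>t. 0 < t \<and> t < \<tau> \<longrightarrow> \<bar>t * E' 0 v + t^2 * (D u + D v / 2)\<bar> \<le> \<epsilon> * t^2"
  proof (intro exI[of _ \<tau>] conjI allI impI)
    show "\<tau> > 0" by (fact \<tau>pos)
    fix t assume t: "0 < t \<and> t < \<tau>"
    have "t < min (min d r) \<delta> / N" using t by (simp add: \<tau>_def)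
    then have "t * N < min (min d r) \<delta>" using N by (simp add: pos_less_divide_eq)
    then have tN: "t * N < d" "t * N < r" "t * N < \<delta>" by auto
    have "t < \<epsilon> / (4*C0*N^3 + 1)" using t by (simp add: \<tau>_def)
    then have "t * (4*C0*N^3 + 1) < \<epsilon>" using den by (simp add: pos_less_divide_eq)
    then have tC: "4*C0*N^3*t \<le> \<epsilon>" using t by (simp add: algebra_simps)
    define y where "y s = t *\<^sub>R u + s *\<^sub>R v" for s
    have ny: "norm (y s) \<le> t * N" if "0 \<le> s" "s \<le> t" for s
    proof -
      have "norm (y s) \<le> norm (t *\<^sub>R u) + norm (s *\<^sub>R v)" unfolding y_def by (rule norm_triangle_ineq)
      also have "\<dots> = t * norm u + s * norm v" using t that by simp
      also have "\<dots> \<le> t * norm u + t * norm v" using that by (simp add: mult_right_mono)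
      also have "\<dots> \<le> t * N" using N t by (simp add: distrib_left[symmetric])
      finally show ?thesis .
    qed
    define \<psi> where "\<psi> s = E (y s) - s * E' 0 v - s * t * D u - s^2/2 * D v" for s
    have d\<psi>: "DERIV \<psi> s :> (E' (y s) v - E' 0 v - t * D u - s * D v)" if "0 \<le> s" "s \<le> t" for s
    proof -
      have "norm (y s) < r" using ny[OF that] tN by linarith
      then have yU: "y s \<in> U" using r by auto
      have lin: "(y has_derivative (\<lambda>h. h *\<^sub>R v)) (at s)"
        unfolding y_def[abs_def] by (auto intro!: derivative_eq_intros)
      have bl: "bounded_linear (E' (y s))" using dE[OF yU] has_derivative_bounded_linear by blast
      have "((\<lambda>s. E (y s)) has_derivative (\<lambda>h. E' (y s) (h *\<^sub>R v))) (at s)"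
        by (rule has_derivative_compose[OF lin dE[OF yU]])
      moreover have "(\<lambda>h. E' (y s) (h *\<^sub>R v)) = (*) (E' (y s) v)"
        using bounded_linear.linear[OF bl] by (auto simp: linear_scale)
      ultimately have dEy: "DERIV (\<lambda>s. E (y s)) s :> E' (y s) v"
        by (simp add: has_field_derivative_def)
      show ?thesis
        unfolding \<psi>_def[abs_def]
        by (rule derivative_eq_intros dEy refl | simp add: power2_eq_square)+
    qed
    obtain \<xi> where \<xi>: "0 < \<xi>" "\<xi> < t" "\<psi> t - \<psi> 0 = (t - 0) * (E' (y \<xi>) v - E' 0 v - t * D u - \<xi> * D v)"
      using MVT2[of 0 t \<psi> "\<lambda>s. E' (y s) v - E' 0 v - t * D u - s * D v"] d\<psi> t by auto
    have Dy: "D (y \<xi>) = t * D u + \<xi> * D v"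
      using bounded_linear.linear[OF blD] by (simp add: y_def linear_add linear_scale)
    have b1: "\<bar>E' (y \<xi>) v - E' 0 v - t * D u - \<xi> * D v\<bar> \<le> \<epsilon>/2 * t"
    proof -
      have ny\<xi>: "norm (y \<xi>) \<le> t * N" using ny \<xi> by auto
      have "\<bar>E' (y \<xi>) v - E' 0 v - t * D u - \<xi> * D v\<bar> = \<bar>E' (y \<xi>) v - E' 0 v - D (y \<xi>)\<bar>"
        by (simp add: Dy algebra_simps)
      also have "\<dots> \<le> (\<epsilon>/2/N) * norm (y \<xi>)" using dd ny\<xi> tN by force
      also have "\<dots> \<le> (\<epsilon>/2/N) * (t * N)" using ny\<xi> \<epsilon> N by (intro mult_left_mono) auto
      also have "\<dots> = \<epsilon>/2 * t" using N by simp
      finally show ?thesis .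
    qed
    have bE: "\<bar>E (y s)\<bar> \<le> C0 * (t * N)^3" if "0 \<le> s" "s \<le> t" for s
    proof -
      have "norm (y s) < \<delta>" using ny[OF that] tN by linarith
      then have "\<bar>E (y s)\<bar> \<le> C0 * norm (y s) ^ 3" by (rule C0)
      also have "\<dots> \<le> C0 * (t * N)^3" using ny[OF that] C00 by (intro mult_left_mono power_mono) auto
      finally show ?thesis .
    qed
    have b2: "\<bar>E (y t)\<bar> \<le> C0 * (t * N)^3" using bE t by auto
    have b3: "\<bar>E (y 0)\<bar> \<le> C0 * (t * N)^3" using bE t by auto
    have eq: "t * E' 0 v + t^2 * (D u + D v / 2) = E (y t) - E (y 0) - (\<psi> t - \<psi> 0)"
      by (simp add: \<psi>_def power2_eq_square algebra_simps)
    have "\<bar>t * E' 0 v + t^2 * (D u + D v / 2)\<bar> \<le> \<bar>E (y t)\<bar> + \<bar>E (y 0)\<bar> + \<bar>\<psi> t - \<psi> 0\<bar>"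
      unfolding eq by linarith
    also have "\<bar>\<psi> t - \<psi> 0\<bar> \<le> t * (\<epsilon>/2 * t)"
      using \<xi>(3) b1 t by (simp add: abs_mult mult_left_mono)
    finally have "\<bar>t * E' 0 v + t^2 * (D u + D v / 2)\<bar> \<le> 2 * (C0 * (t * N)^3) + t * (\<epsilon>/2 * t)"
      using b2 b3 by linarith
    also have "2 * (C0 * (t * N)^3) = t^2 * (2 * C0 * N^3 * t)" by (simp add: power2_eq_square power3_eq_cube algebra_simps)
    also have "\<dots> \<le> t^2 * (\<epsilon>/2)" using tC by (intro mult_left_mono) auto
    finally show "\<bar>t * E' 0 v + t^2 * (D u + D v / 2)\<bar> \<le> \<epsilon> * t^2"
      by (simp add: power2_eq_square algebra_simps)
  qed
qed


lemma smooth_has_deriv: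
  assumes "open U" "smooth_on U E" "x \<in> U"
  shows "(E has_derivative frechet_derivative E (at x)) (at x)"
proof -
  have "iter_deriv [] E differentiable_on U" using assms(2) unfolding smooth_on_def by blast
  then have "E differentiable (at x within U)" using assms(3) by (simp add: differentiable_on_def)
  then have "E differentiable (at x)" using at_within_open[OF assms(3,1)] by simp
  then show ?thesis by (simp add: frechet_derivative_works)
qed

lemma smooth_has_deriv2:
  assumes "open U" "smooth_on U E" "x \<in> U"
  shows "((\<lambda>y. frechet_derivative E (at y) v) has_derivative
           frechet_derivative (\<lambda>y. frechet_derivative E (at y) v) (at x)) (at x)"
proof -
  have "iter_deriv [v] E differentiable_on U" using assms(2) unfolding smooth_on_def by blast
  then have "(\<lambda>y. frechet_derivative E (at y) v) differentiable (at x within U)"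
    using assms(3) by (simp add: differentiable_on_def)
  then have "(\<lambda>y. frechet_derivative E (at y) v) differentiable (at x)"
    using at_within_open[OF assms(3,1)] by simp
  then show ?thesis by (simp add: frechet_derivative_works)
qed

lemma deriv_small:
  fixes E :: "'a::euclidean_space \<Rightarrow> real"
  assumes U: "open U" "0 \<in> U" and sm: "smooth_on U E" and dpos: "\<delta> > 0"
    and bd: "\<And>z. norm z < \<delta> \<Longrightarrow> \<bar>E z\<bar> \<le> C * norm z ^ 3" and \<epsilon>: "\<epsilon> > 0"
  shows "\<exists>r>0. \<forall>y. norm y < r \<longrightarrow> y \<in> U \<and> (\<forall>w. \<bar>frechet_derivative E (at y) w\<bar> \<le> \<epsilon> * norm y * norm w)"
proof -
  define E' where "E' x = frechet_derivative E (at x)" for x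
  define D where "D v = frechet_derivative (\<lambda>y. E' y v) (at 0)" for v
  have dE: "(E has_derivative E' x) (at x)" if "x \<in> U" for x
    unfolding E'_def by (rule smooth_has_deriv[OF U(1) sm that])
  have dg: "((\<lambda>x. E' x v) has_derivative D v) (at 0)" for v
    unfolding E'_def D_def by (rule smooth_has_deriv2[OF U(1) sm U(2)])
  have z: "E' 0 v = 0 \<and> D v u + D v v / 2 = 0" for u v
    by (rule real_quad_zero[OF key_est[OF U dE dg dpos bd]])
  have D0: "D v u = 0" for u v
  proof -
    have bl: "bounded_linear (D v)" using dg has_derivative_bounded_linear by blast
    have "D v 0 = 0" using bounded_linear.linear[OF bl] by (simp add: linear_0)
    then have "D v v = 0" using z[of v 0] by simp
    then show ?thesis using z[of v u] by simp
  qed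
  have small: "eventually (\<lambda>y. \<bar>E' y v\<bar> \<le> e * norm y) (nhds 0)" if "e > 0" for v e
  proof -
    obtain d where d: "d > 0" "\<forall>y. norm (y - 0) < d \<longrightarrow> norm (E' y v - E' 0 v - D v (y - 0)) \<le> e * norm (y - 0)"
      using dg[of v, unfolded has_derivative_at_alt] \<open>e > 0\<close> by blast
    then have "\<forall>y. dist y 0 < d \<longrightarrow> \<bar>E' y v\<bar> \<le> e * norm y"
      using z D0 by (simp add: dist_norm)
    then show ?thesis unfolding eventually_nhds_metric using d(1) by blast
  qed
  define e where "e = \<epsilon> / real DIM('a)"
  have e: "e > 0" using \<epsilon> by (simp add: e_def)
  have "eventually (\<lambda>y. \<forall>b\<in>Basis. \<bar>E' y b\<bar> \<le> e * norm y) (nhds 0)"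
    by (rule eventually_ball_finite) (use small e in auto)
  moreover have "eventually (\<lambda>y. y \<in> U) (nhds 0)"
    using U by (rule eventually_nhds_in_open)
  ultimately have "eventually (\<lambda>y. y \<in> U \<and> (\<forall>b\<in>Basis. \<bar>E' y b\<bar> \<le> e * norm y)) (nhds 0)"
    by (simp add: eventually_conj_iff)
  then obtain r where r: "r > 0" "\<And>y. dist y 0 < r \<Longrightarrow> y \<in> U \<and> (\<forall>b\<in>Basis. \<bar>E' y b\<bar> \<le> e * norm y)"
    unfolding eventually_nhds_metric by blast
  show ?thesis
  proof (intro exI[of _ r] conjI allI impI)
    show "r > 0" by (fact r(1))
    fix y :: 'a assume y: "norm y < r"
    then have yr: "y \<in> U" "\<And>b. b \<in> Basis \<Longrightarrow> \<bar>E' y b\<bar> \<le> e * norm y" using r(2)[of y] by (auto simp: dist_norm)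
    show "y \<in> U" by (fact yr(1))
    fix w :: 'a
    have lin: "linear (E' y)" using dE[OF yr(1)] has_derivative_bounded_linear bounded_linear.linear by blast
    have "E' y w = E' y (\<Sum>b\<in>Basis. (w \<bullet> b) *\<^sub>R b)" by (simp add: euclidean_representation)
    also have "\<dots> = (\<Sum>b\<in>Basis. (w \<bullet> b) * E' y b)" using lin by (simp add: linear_sum linear_scale o_def)
    finally have "\<bar>E' y w\<bar> \<le> (\<Sum>b\<in>Basis. \<bar>w \<bullet> b\<bar> * \<bar>E' y b\<bar>)"
      by (metis (no_types, lifting) abs_mult sum.cong sum_abs)
    also have "\<dots> \<le> (\<Sum>b\<in>(Basis::'a set). norm w * (e * norm y))"
      by (intro sum_mono mult_mono) (auto simp: Basis_le_norm yr(2))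
    also have "\<dots> = \<epsilon> * norm y * norm w" by (simp add: e_def)
    finally show "\<bar>frechet_derivative E (at y) w\<bar> \<le> \<epsilon> * norm y * norm w" by (simp add: E'_def)
  qed
qed



lemma matrix_lower_bound:
  fixes S :: "real^'m^'m"
  assumes "det S \<noteq> 0"
  obtains c where "c > 0" "\<And>x. c * norm x \<le> norm (S *v x)"
proof -
  obtain Bm where Bm: "Bm ** S = mat 1"
    using assms by (metis invertible_det_nz invertible_left_inverse)
  obtain K where K: "K > 0" "\<And>y. norm (Bm *v y) \<le> norm y * K"
    using bounded_linear.pos_bounded[OF matrix_vector_mul_bounded_linear[of Bm]] by blast
  have "(1/K) * norm x \<le> norm (S *v x)" for x
  proof -
    have "x = Bm *v (S *v x)" by (simp add: matrix_vector_mul_assoc Bm)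
    then have "norm x \<le> norm (S *v x) * K" using K(2) by metis
    then show ?thesis using K(1) by (simp add: divide_simps mult.commute)
  qed
  then show ?thesis using that K(1) by (metis divide_pos_pos zero_less_one)
qed

lemma part3:
  fixes E :: "complex^'n \<Rightarrow> real"
  assumes sym: "transpose S = S" and det: "det S \<noteq> 0" and U: "open U" "0 \<in> U"
    and sm: "smooth_on U E" and dpos: "\<delta> > 0" and bd: "\<And>z. norm z < \<delta> \<Longrightarrow> \<bar>E z\<bar> \<le> C * norm z ^ 3"
  shows "isolated_CR_singularity_at_origin U (\<lambda>z. qf S z + E z)"
proof -
  obtain c where c: "c > 0" "\<And>x. c * norm x \<le> norm (S *v x)"
    using matrix_lower_bound[OF det] by blast
  obtain r where r: "r > 0" "\<And>y. norm y < r \<Longrightarrow> y \<in> U \<and> (\<forall>w. \<bar>frechet_derivative E (at y) w\<bar> \<le> c * norm y * norm w)"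
    using deriv_small[OF U sm dpos bd c(1)] by blast
  have fd: "frechet_derivative (\<lambda>z. qf S z + E z) (at y) = (\<lambda>w. 2 * (realify w \<bullet> (S *v realify y)) + frechet_derivative E (at y) w)"
    if "y \<in> U" for y
    using frechet_derivative_at[OF has_derivative_add[OF qf_deriv[OF sym] smooth_has_deriv[OF U(1) sm that]]]
    by simp
  have CR0: "CR_singular_graph (\<lambda>z. qf S z + E z) 0"
    unfolding CR_sing_iff fd[OF U(2)] using r(2)[of 0] r(1) by simp
  have nCR: "\<not> CR_singular_graph (\<lambda>z. qf S z + E z) z" if z: "norm z < r" "z \<noteq> 0" for z
  proof
    assume "CR_singular_graph (\<lambda>z. qf S z + E z) z"
    moreover have zU: "z \<in> U" using r(2) z by blast
    ultimately have all0: "\<forall>w. 2 * (realify w \<bullet> (S *v realify z)) + frechet_derivative E (at z) w = 0"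
      unfolding CR_sing_iff fd[OF zU] by blast
    define w where "w = unrealify (S *v realify z)"
    define m where "m = norm (S *v realify z)"
    have "2 * (realify w \<bullet> (S *v realify z)) = 2 * m^2" by (simp add: w_def m_def power2_norm_eq_inner)
    moreover have "\<bar>frechet_derivative E (at z) w\<bar> \<le> c * norm z * m"
      using r(2)[OF z(1)] norm_unrealify[of "S *v realify z"] unfolding w_def m_def by metis
    moreover have czm: "c * norm z \<le> m" using c(2)[of "realify z"] by (simp add: m_def)
    moreover have "c * norm z > 0" using c z by simp
    ultimately have "2 * m^2 + frechet_derivative E (at z) w > 0"
    proof -
      assume a: "2 * (realify w \<bullet> (S *v realify z)) = 2 * m^2"
        "\<bar>frechet_derivative E (at z) w\<bar> \<le> c * norm z * m" "c * norm z \<le> m" "c * norm z > 0"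
      have "c * norm z * m \<le> m * m" using a(3) a(4) by (intro mult_right_mono) auto
      moreover have "m * m > 0" using a(3) a(4) by simp
      ultimately show ?thesis using a(2) by (simp add: power2_eq_square)
    qed
    moreover have "2 * (realify w \<bullet> (S *v realify z)) + frechet_derivative E (at z) w = 0"
      using all0 by blast
    ultimately show False using \<open>2 * (realify w \<bullet> (S *v realify z)) = 2 * m^2\<close> by linarith
  qed
  show ?thesis
    unfolding isolated_CR_singularity_at_origin_def
  proof (intro conjI exI[of _ "ball 0 r \<times> UNIV"])
    show "0 \<in> U" by (fact U(2))
    show "CR_singular_graph (\<lambda>z. qf S z + E z) 0" by (fact CR0)
    show "open (ball 0 r \<times> (UNIV :: real set))" by (simp add: open_Times)
    show "(0, qf S 0 + E 0) \<in> ball 0 r \<times> UNIV" using r(1) by simp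
    show "\<forall>z\<in>U. (z, qf S z + E z) \<in> ball 0 r \<times> UNIV \<and> z \<noteq> 0 \<longrightarrow> \<not> CR_singular_graph (\<lambda>z. qf S z + E z) z"
      using nCR by auto
  qed
qed



lemma rpf_sum:
  assumes "finite I" "\<And>i. i \<in> I \<Longrightarrow> f i \<in> real_poly_fun"
  shows "(\<lambda>A. \<Sum>i\<in>I. f i A) \<in> real_poly_fun"
  using assms
proof (induction I rule: finite_induct)
  case empty
  then show ?case using real_poly_fun.const[of 0] by simp
next
  case (insert x F)
  then show ?case by (simp add: real_poly_fun.add)
qed

lemma rpf_prod:
  assumes "finite I" "\<And>i. i \<in> I \<Longrightarrow> f i \<in> real_poly_fun"
  shows "(\<lambda>A. \<Prod>i\<in>I. f i A) \<in> real_poly_fun"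
  using assms
proof (induction I rule: finite_induct)
  case empty
  then show ?case using real_poly_fun.const[of 1] by simp
next
  case (insert x F)
  then show ?case by (simp add: real_poly_fun.mult)
qed

lemma rpf_cont: "p \<in> real_poly_fun \<Longrightarrow> continuous_on UNIV p"
  by (induction p rule: real_poly_fun.induct) (auto intro!: continuous_intros)

lemma rpf_entry: "(\<lambda>A. Smat \<sigma> a b (\<lambda>i j. A$i$j) $ k $ l) \<in> real_poly_fun"
proof (cases k; cases l)
  fix i j assume kl: "k = Inl i" "l = Inl j"
  have eq: "(\<lambda>A. Smat \<sigma> a b (\<lambda>i j. A$i$j) $ k $ l) = (\<lambda>A. (if i = j then hcoef \<sigma> a b i else 0) + (Re (A$i$j) + Re (A$j$i)))"
    by (simp add: Smat_def kl)
  show ?thesis unfolding eq by (intro real_poly_fun.intros)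
next
  fix i j assume kl: "k = Inl i" "l = Inr j"
  have eq: "(\<lambda>A. Smat \<sigma> a b (\<lambda>i j. A$i$j) $ k $ l) = (\<lambda>A. (-1) * (Im (A$i$j) + Im (A$j$i)))"
    by (simp add: Smat_def kl)
  show ?thesis unfolding eq by (intro real_poly_fun.intros)
next
  fix i j assume kl: "k = Inr i" "l = Inl j"
  have eq: "(\<lambda>A. Smat \<sigma> a b (\<lambda>i j. A$i$j) $ k $ l) = (\<lambda>A. (-1) * (Im (A$i$j) + Im (A$j$i)))"
    by (simp add: Smat_def kl)
  show ?thesis unfolding eq by (intro real_poly_fun.intros)
next
  fix i j assume kl: "k = Inr i" "l = Inr j"
  have eq: "(\<lambda>A. Smat \<sigma> a b (\<lambda>i j. A$i$j) $ k $ l) = (\<lambda>A. (if i = j then hcoef \<sigma> a b i else 0) + (-1) * (Re (A$i$j) + Re (A$j$i)))"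
    by (simp add: Smat_def kl)
  show ?thesis unfolding eq by (intro real_poly_fun.intros)
qed

lemma rpf_det: "(\<lambda>A. det (Smat \<sigma> a b (\<lambda>i j. A$i$j))) \<in> real_poly_fun"
  unfolding det_def
  by (intro rpf_sum real_poly_fun.mult real_poly_fun.const rpf_prod rpf_entry finite_permutations) auto


lemma M1_det: "det (Smat \<sigma> a b (\<lambda>i j. (mat 1 :: complex^'n^'n)$i$j)) \<noteq> 0"
proof -
  let ?M = "Smat \<sigma> a b (\<lambda>i j. (mat 1 :: complex^'n^'n)$i$j)"
  have diag: "?M $ k $ l = 0" if "k \<noteq> l" for k l
    using that by (auto simp: Smat_def mat_def split: sum.splits)
  have nz: "?M $ k $ k \<noteq> 0" for k
    by (cases k) (auto simp: Smat_def mat_def hcoef_def)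
  show ?thesis
    using nz by (simp add: det_diagonal[OF diag])
qed

lemma Smat_affine:
  "Smat \<sigma> a b (\<lambda>i j. ((1-t) *\<^sub>R A + t *\<^sub>R B)$i$j) =
     (1-t) *\<^sub>R Smat \<sigma> a b (\<lambda>i j. A$i$j) + t *\<^sub>R Smat \<sigma> a b (\<lambda>i j. B$i$j)"
  by (auto simp: Smat_def vec_eq_iff algebra_simps split: sum.splits)

lemma q_poly:
  fixes M0 M1 :: "real^'m^'m"
  shows "real_polynomial_function (\<lambda>t. det ((1-t) *\<^sub>R M0 + t *\<^sub>R M1))"
proof -
  have e: "real_polynomial_function (\<lambda>t::real. ((1-t) *\<^sub>R M0 + t *\<^sub>R M1) $ k $ l)" for k l
  proof -
    have "(\<lambda>t::real. ((1-t) *\<^sub>R M0 + t *\<^sub>R M1) $ k $ l) = (\<lambda>t. M0$k$l + t * (M1$k$l - M0$k$l))"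
      by (auto simp: algebra_simps)
    moreover have "real_polynomial_function (\<lambda>t::real. M0$k$l + t * (M1$k$l - M0$k$l))"
      by (intro real_polynomial_function.intros bounded_linear_mult_left)
    ultimately show ?thesis by simp
  qed
  show ?thesis
    unfolding det_def
    by (intro real_polynomial_function_sum real_polynomial_function.intros(4) real_polynomial_function.intros(2)
        real_polynomial_function_prod e finite_permutations) auto
qed


lemma part2:
  "let S = {A :: (complex^'n^'n). transpose A = A};
       G = {A\<in>S. isolated_CR_singularity_at_origin UNIV (quadQ \<sigma> a b (bilin_of_matrix A))}
   in openin (top_of_set S) G \<and> S \<subseteq> closure G \<and> proper_real_algebraic_subvariety S (S - G)"
proof -
  define S where "S = {A :: (complex^'n^'n). transpose A = A}"
  define p where "p A = det (Smat \<sigma> a b (\<lambda>i j. A$i$j))" for A :: "complex^'n^'n"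
  define G where "G = {A\<in>S. isolated_CR_singularity_at_origin UNIV (quadQ \<sigma> a b (bilin_of_matrix A))}"
  have Geq: "G = {A\<in>S. p A \<noteq> 0}"
    by (simp add: G_def p_def quadQ_matrix iso_qf[OF Smat_sym])
  have prpf: "p \<in> real_poly_fun" unfolding p_def[abs_def] by (rule rpf_det)
  have pc: "continuous_on UNIV p" by (rule rpf_cont[OF prpf])
  have I1: "mat 1 \<in> S" by (simp add: S_def)
  have p1: "p (mat 1) \<noteq> 0" unfolding p_def by (rule M1_det)
  have op: "openin (top_of_set S) G"
  proof -
    have "open {A. p A \<noteq> 0}" by (rule open_Collect_neq[OF pc continuous_on_const])
    then have "openin (top_of_set S) (S \<inter> {A. p A \<noteq> 0})" by (rule openin_open_Int)
    moreover have "S \<inter> {A. p A \<noteq> 0} = G" by (auto simp: Geq)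
    ultimately show ?thesis by simp
  qed
  have pr: "proper_real_algebraic_subvariety S (S - G)"
    unfolding proper_real_algebraic_subvariety_def
  proof (intro conjI exI[of _ "{p}"])
    show "finite {p}" by simp
    show "{p} \<subseteq> real_poly_fun" using prpf by simp
    show "S - G = {A \<in> S. \<forall>q\<in>{p}. q A = 0}" by (auto simp: Geq)
    show "S - G \<noteq> S" using I1 p1 by (auto simp: Geq)
  qed
  have cl: "S \<subseteq> closure G"
  proof
    fix A assume A: "A \<in> S"
    then have Asym: "A$j$i = A$i$j" for i j
      by (metis (mono_tags, lifting) S_def mem_Collect_eq transpose_def vec_lambda_beta)
    define M0 where "M0 = Smat \<sigma> a b (\<lambda>i j. A$i$j)"
    define M1 where "M1 = Smat \<sigma> a b (\<lambda>i j. (mat 1 :: complex^'n^'n)$i$j)"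
    define q where "q t = det ((1-t) *\<^sub>R M0 + t *\<^sub>R M1)" for t :: real
    obtain c n where qc: "q = (\<lambda>x. \<Sum>i\<le>n. c i * x^i)"
      using q_poly[of M0 M1] unfolding q_def[abs_def] real_polynomial_function_iff_sum by blast
    have q1: "q 1 \<noteq> 0" using M1_det by (simp add: q_def M1_def)
    have "\<exists>k. k \<le> n \<and> c k \<noteq> 0"
    proof (rule ccontr)
      assume "\<not> (\<exists>k. k \<le> n \<and> c k \<noteq> 0)"
      then have "q 1 = 0" by (simp add: qc)
      with q1 show False by simp
    qed
    then have finR: "finite {x. q x = 0}" unfolding qc by (rule polyfun_rootbound_finite)
    show "A \<in> closure G"
      unfolding closure_approachable
    proof (intro allI impI)
      fix e :: real assume e: "e > 0"
      define K where "K = norm (mat 1 - A) + 1"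
      have K: "K > 0" "norm (mat 1 - A) \<le> K" by (auto simp: K_def add_nonneg_pos)
      define \<tau> where "\<tau> = min 1 (e / K)"
      have \<tau>: "\<tau> > 0" using e K by (simp add: \<tau>_def)
      have "infinite {0<..<\<tau>}" using \<tau> by simp
      then have "\<not> {0<..<\<tau>} \<subseteq> {x. q x = 0}" using finR finite_subset by blast
      then obtain t where t: "0 < t" "t < \<tau>" "q t \<noteq> 0" by (auto simp: subset_iff)
      define At where "At = (1-t) *\<^sub>R A + t *\<^sub>R (mat 1 :: complex^'n^'n)"
      have AtS: "At \<in> S"
        by (simp add: S_def At_def transpose_def vec_eq_iff mat_def Asym)
      have pAt: "p At = q t"
        unfolding p_def At_def q_def M0_def M1_def by (simp only: Smat_affine)
      have AtG: "At \<in> G" using AtS pAt t by (simp add: Geq)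
      have "dist At A = norm (t *\<^sub>R (mat 1 - A))"
        by (simp add: dist_norm At_def algebra_simps)
      also have "\<dots> = t * norm (mat 1 - A)" using t by simp
      also have "\<dots> \<le> t * K" using t K by (intro mult_left_mono) auto
      also have "\<dots> < e"
      proof -
        have "t < e / K" using t by (simp add: \<tau>_def)
        then show ?thesis using K by (simp add: pos_less_divide_eq)
      qed
      finally show "\<exists>y\<in>G. dist y A < e" using AtG by blast
    qed
  qed
  show ?thesis unfolding Let_def S_def[symmetric] G_def[symmetric] using op cl pr by blast
qed


lemma nondeg_qf:
  assumes sym: "transpose S = S"
  shows "nondegenerate_form (qf S) \<longleftrightarrow> det S \<noteq> 0"
proof
  assume "det S \<noteq> 0"
  then show "nondegenerate_form (qf S)"
    unfolding nondegenerate_form_def using sym by (intro exI[of _ S]) (auto simp: qf_def)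
next
  assume "nondegenerate_form (qf S)"
  then obtain S' where S': "transpose S' = S'" "\<And>z. qf S z = realify z \<bullet> (S' *v realify z)" "det S' \<noteq> 0"
    unfolding nondegenerate_form_def by blast
  have "qf S = qf S'" by (rule ext) (simp only: S'(2) qf_def[of S'])
  then show "det S \<noteq> 0" using iso_qf[OF S'(1)] iso_qf[OF sym] S'(3) by simp
qed

theorem proposition2p1:
  fixes \<sigma> :: "'n::finite \<Rightarrow> nat" and a b :: nat
  assumes enum: "bij_betw \<sigma> UNIV {..<CARD('n)}"
    and ab: "a + b \<le> CARD('n)"
  shows
    "(\<forall>B. cbilinear B \<longrightarrow>
        (isolated_CR_singularity_at_origin UNIV (quadQ \<sigma> a b B)
           \<longleftrightarrow> nondegenerate_form (quadQ \<sigma> a b B)))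
   \<and> (let S = {A :: (complex^'n^'n). transpose A = A};
          G = {A\<in>S. isolated_CR_singularity_at_origin UNIV (quadQ \<sigma> a b (bilin_of_matrix A))}
      in openin (top_of_set S) G \<and> S \<subseteq> closure G
         \<and> proper_real_algebraic_subvariety S (S - G))
   \<and> (\<forall>B U (E :: complex^'n \<Rightarrow> real).
        cbilinear B \<and> open U \<and> 0 \<in> U \<and> smooth_on U E
        \<and> (\<exists>C \<delta>. \<delta> > 0 \<and> (\<forall>z. norm z < \<delta> \<longrightarrow> \<bar>E z\<bar> \<le> C * norm z ^ 3))
        \<and> nondegenerate_form (quadQ \<sigma> a b B)
        \<longrightarrow> isolated_CR_singularity_at_origin U (\<lambda>z. quadQ \<sigma> a b B z + E z))"
proof (intro conjI)
  show "\<forall>B. cbilinear B \<longrightarrow>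
        (isolated_CR_singularity_at_origin UNIV (quadQ \<sigma> a b B)
           \<longleftrightarrow> nondegenerate_form (quadQ \<sigma> a b B))"
    by (auto simp: quadQ_cbil iso_qf[OF Smat_sym] nondeg_qf[OF Smat_sym])
  show "let S = {A :: (complex^'n^'n). transpose A = A};
          G = {A\<in>S. isolated_CR_singularity_at_origin UNIV (quadQ \<sigma> a b (bilin_of_matrix A))}
      in openin (top_of_set S) G \<and> S \<subseteq> closure G
         \<and> proper_real_algebraic_subvariety S (S - G)"
    by (rule part2)
  show "\<forall>B U (E :: complex^'n \<Rightarrow> real).
        cbilinear B \<and> open U \<and> 0 \<in> U \<and> smooth_on U E
        \<and> (\<exists>C \<delta>. \<delta> > 0 \<and> (\<forall>z. norm z < \<delta> \<longrightarrow> \<bar>E z\<bar> \<le> C * norm z ^ 3))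
        \<and> nondegenerate_form (quadQ \<sigma> a b B)
        \<longrightarrow> isolated_CR_singularity_at_origin U (\<lambda>z. quadQ \<sigma> a b B z + E z)"
  proof (intro allI impI, elim conjE exE)
    fix B U C \<delta> and E :: "complex^'n \<Rightarrow> real"
    assume U: "open U" "0 \<in> U" and sm: "smooth_on U E" and dpos: "\<delta> > 0"
      and bd: "\<forall>z. norm z < \<delta> \<longrightarrow> \<bar>E z\<bar> \<le> C * norm z ^ 3"
      and nd: "nondegenerate_form (quadQ \<sigma> a b B)"
    obtain S' where S': "transpose S' = S'" "\<And>z. quadQ \<sigma> a b B z = realify z \<bullet> (S' *v realify z)" "det S' \<noteq> 0"
      using nd unfolding nondegenerate_form_def by blast
    have eq: "(\<lambda>z. quadQ \<sigma> a b B z + E z) = (\<lambda>z. qf S' z + E z)"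
      by (simp add: S'(2) qf_def)
    show "isolated_CR_singularity_at_origin U (\<lambda>z. quadQ \<sigma> a b B z + E z)"
      unfolding eq using part3[OF S'(1) S'(3) U sm dpos] bd by blast
  qed
qed

end
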